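(* Let $\Omega\subset\mathbb{C}$ be a domain and let $\omega\in L^2_{\mathrm{loc}}(\Omega)$ satisfy a weak reverse Hölder inequality: there is a constant $c$ such that $$\Bigl(\frac1{r^2}\int_{\mathbb{D}(a,r)}\omega^2\,dm\Bigr)^{1/2}\le\frac{c}{r^2}\int_{\mathbb{D}(a,2r)}|\omega|\,dm$$ for every disk with $\mathbb{D}(a,2r)\subset\Omega$. Then for almost every point $z_0$ of the zero set $\{z\in\Omega:\omega(z)=0\}$ and for every positive integer $N$ there exists $r_0=r_0(z_0,N)>0$ with $\mathbb{D}(z_0,2r_0)\subset\Omega$ such that $$\int_{\mathbb{D}(z_0,r)}|\omega|\,dm\le\frac{r^N}{r_0^N}\int_{\mathbb{D}(z_0,2r_0)}|\omega|\,dm\qquad\text{for all }0<r\le r_0.$$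
   Context: $m$ denotes planar Lebesgue measure and $\mathbb{D}(a,r)$ the open disk of center $a$ and radius $r$. *)

theory Defs
  imports "HOL-Analysis.Analysis"
begin

text \<open>Planar Lebesgue measure is lebesgue on type complex; the open disk D(a,r) is ball a r.\<close>

definition L2_loc :: "complex set \<Rightarrow> (complex \<Rightarrow> real) \<Rightarrow> bool" where
  "L2_loc \<Omega> \<omega> \<longleftrightarrow>
     set_borel_measurable lebesgue \<Omega> \<omega> \<and>
     (\<forall>K. compact K \<and> K \<subseteq> \<Omega> \<longrightarrow> set_integrable lebesgue K (\<lambda>z. (\<omega> z)\<^sup>2))"

definition weak_RHI :: "complex set \<Rightarrow> (complex \<Rightarrow> real) \<Rightarrow> bool" where
  "weak_RHI \<Omega> \<omega> \<longleftrightarrow> (\<exists>c::real. \<forall>a r. 0 < r \<and> ball a (2 * r) \<subseteq> \<Omega> \<longrightarrow>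
     sqrt ((1 / r\<^sup>2) * (LINT z:ball a r|lebesgue. (\<omega> z)\<^sup>2))
       \<le> (c / r\<^sup>2) * (LINT z:ball a (2 * r)|lebesgue. \<bar>\<omega> z\<bar>))"

end

theory Submission
  imports Defs
begin


lemma bad_negligible:
  fixes Z :: "complex set" and e :: real
  assumes Z: "Z \<in> sets lebesgue" and e: "e > 0"
  shows "negligible {x\<in>Z. \<not> (\<exists>\<delta>>0. \<forall>r. 0 < r \<and> r < \<delta> \<longrightarrow>
            measure lebesgue (ball x r - Z) \<le> e * measure lebesgue (ball x r))}"
    (is "negligible ?B")
  unfolding negligible_outer_le
proof (intro allI impI)
  fix \<eta> :: real assume "\<eta> > 0"
  obtain G where G: "open G" "Z \<subseteq> G" "G - Z \<in> lmeasurable"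
      and Gm: "emeasure lebesgue (G - Z) < ennreal (\<eta> * e)"
    using sets_lebesgue_outer_open[OF Z, of "\<eta> * e"] \<open>\<eta> > 0\<close> e by auto
  have GZ: "measure lebesgue (G - Z) < \<eta> * e"
    using Gm G(3) by (simp add: emeasure_eq_measure2 ennreal_less_iff)
  let ?K = "{(x,r). x \<in> ?B \<and> 0 < r \<and> ball x r \<subseteq> G \<and>
              e * measure lebesgue (ball x r) < measure lebesgue (ball x r - Z)}"
  obtain C where "countable C" and Csub: "C \<subseteq> ?K"
    and pwC: "pairwise (\<lambda>i j. disjnt (ball (fst i) (snd i)) (ball (fst j) (snd j))) C"
    and negC: "negligible(?B - (\<Union>i \<in> C. ball (fst i) (snd i)))"
  proof (rule Vitali_covering_theorem_balls [of ?B ?K fst snd])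
    fix x and d :: real
    assume x: "x \<in> ?B" and "d > 0"
    have xZ: "x \<in> Z" using x by simp
    obtain k where "k > 0" and k: "ball x k \<subseteq> G"
      using xZ G(1,2) openE by blast
    have nb: "\<forall>\<delta>>0. \<exists>r>0. r < \<delta> \<and> \<not> measure lebesgue (ball x r - Z) \<le> e * measure lebesgue (ball x r)"
      using x by auto
    have "min d k > 0" using \<open>d > 0\<close> \<open>k > 0\<close> by simp
    from nb[rule_format, OF this] obtain r where r: "0 < r" "r < min d k"
       and bad: "\<not> measure lebesgue (ball x r - Z) \<le> e * measure lebesgue (ball x r)"
      by blast
    have "ball x r \<subseteq> ball x k" using r by (intro subset_ball) simp
    then have "ball x r \<subseteq> G" using k by blast
    then have "(x,r) \<in> ?K" using x r(1) bad by (simp add: not_le)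
    then show "\<exists>i. i \<in> ?K \<and> x \<in> ball (fst i) (snd i) \<and> snd i < d"
      using r by (intro exI[of _ "(x,r)"]) simp
  qed
  let ?F = "\<lambda>i. ball (fst i) (snd i)"
  have lee: "measure lebesgue (\<Union>i\<in>I. ?F i) \<le> \<eta>" if "I \<subseteq> C" "finite I" for I
  proof -
    have pwI: "pairwise (\<lambda>i j. disjnt (?F i) (?F j)) I" using pwC that pairwise_subset by blast
    have pwI': "pairwise (\<lambda>i j. disjnt (?F i - Z) (?F j - Z)) I"
      by (rule pairwise_mono[OF pwI]) (auto simp: disjnt_def)
    have "measure lebesgue (\<Union>i\<in>I. ?F i) = (\<Sum>i\<in>I. measure lebesgue (?F i))"
      by (rule measure_UNION') (use that pwI in auto)
    also have "\<dots> \<le> (\<Sum>i\<in>I. measure lebesgue (?F i - Z) / e)"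
    proof (rule sum_mono)
      fix i assume "i \<in> I"
      then have "e * measure lebesgue (?F i) < measure lebesgue (?F i - Z)"
        using that Csub by auto
      then show "measure lebesgue (?F i) \<le> measure lebesgue (?F i - Z) / e"
        using e by (simp add: field_simps)
    qed
    also have "\<dots> = measure lebesgue (\<Union>i\<in>I. ?F i - Z) / e"
      by (subst measure_UNION') (use that pwI' Z in \<open>auto simp: sum_divide_distrib intro: fmeasurable_Diff\<close>)
    also have "\<dots> \<le> measure lebesgue (G - Z) / e"
    proof -
      have "?F i \<subseteq> G" if "i \<in> C" for i using that Csub by (cases i) auto
      then have "(\<Union>i\<in>I. ?F i - Z) \<subseteq> G - Z" using \<open>I \<subseteq> C\<close> by blast
      moreover have "(\<Union>i\<in>I. ?F i - Z) \<in> sets lebesgue"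
        using that Z by (intro sets.finite_UN) auto
      ultimately have "measure lebesgue (\<Union>i\<in>I. ?F i - Z) \<le> measure lebesgue (G - Z)"
        using G(3) by (intro measure_mono_fmeasurable) auto
      then show ?thesis using e by (simp add: divide_right_mono)
    qed
    also have "\<dots> \<le> \<eta>" using GZ e by (simp add: field_simps)
    finally show ?thesis .
  qed
  have Um: "(\<Union>i\<in>C. ?F i) \<in> lmeasurable" and Ule: "measure lebesgue (\<Union>i\<in>C. ?F i) \<le> \<eta>"
    using fmeasurable_UN_bound[OF \<open>countable C\<close> _ lee] measure_UN_bound[OF \<open>countable C\<close> _ lee]
    by auto
  let ?N = "?B - (\<Union>i \<in> C. ?F i)"
  have Nm: "?N \<in> lmeasurable" using negC
    by (simp add: negligible_iff_null_sets null_sets_def fmeasurableI)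
  show "\<exists>T. ?B \<subseteq> T \<and> T \<in> lmeasurable \<and> measure lebesgue T \<le> \<eta>"
  proof (intro exI conjI)
    show "?B \<subseteq> ?N \<union> (\<Union>i\<in>C. ?F i)" by blast
    show "?N \<union> (\<Union>i\<in>C. ?F i) \<in> lmeasurable" by (rule fmeasurable.Un[OF Nm Um])
    have "measure lebesgue (?N \<union> (\<Union>i\<in>C. ?F i)) \<le> measure lebesgue ?N + measure lebesgue (\<Union>i\<in>C. ?F i)"
      using Nm Um by (intro measure_Un_le) auto
    also have "measure lebesgue ?N = 0" using negC negligible_imp_measure0 by blast
    finally show "measure lebesgue (?N \<union> (\<Union>i\<in>C. ?F i)) \<le> \<eta>" using Ule by simp
  qed
qed



lemma density_AE:
  fixes Z :: "complex set"
  assumes Z: "Z \<in> sets lebesgue"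
  shows "AE x in lebesgue. x \<in> Z \<longrightarrow> (\<forall>e>0. \<exists>\<delta>>0. \<forall>r. 0 < r \<and> r < \<delta> \<longrightarrow>
            measure lebesgue (ball x r - Z) \<le> e * measure lebesgue (ball x r))"
proof -
  let ?B = "\<lambda>e. {x\<in>Z. \<not> (\<exists>\<delta>>0. \<forall>r. 0 < r \<and> r < \<delta> \<longrightarrow>
            measure lebesgue (ball x r - Z) \<le> e * measure lebesgue (ball x r))}"
  have "negligible (\<Union>n. ?B (1 / real (Suc n)))"
    by (intro negligible_Union_nat bad_negligible[OF Z]) simp
  then have "(\<Union>n. ?B (1 / real (Suc n))) \<in> null_sets lebesgue"
    using negligible_iff_null_sets by blast
  from AE_not_in[OF this] have "AE x in lebesgue. x \<notin> (\<Union>n. ?B (1 / real (Suc n)))" .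
  then show ?thesis
  proof (rule eventually_mono, intro impI allI)
    fix x and e :: real
    assume x: "x \<notin> (\<Union>n. ?B (1 / real (Suc n)))" and xZ: "x \<in> Z" and e: "e > 0"
    obtain n where n: "inverse (real (Suc n)) < e" using reals_Archimedean e by blast
    from x xZ obtain \<delta> where "\<delta> > 0" and d: "\<forall>r. 0 < r \<and> r < \<delta> \<longrightarrow>
            measure lebesgue (ball x r - Z) \<le> 1 / real (Suc n) * measure lebesgue (ball x r)"
      by blast
    show "\<exists>\<delta>>0. \<forall>r. 0 < r \<and> r < \<delta> \<longrightarrow>
            measure lebesgue (ball x r - Z) \<le> e * measure lebesgue (ball x r)"
    proof (intro exI conjI allI impI)
      fix r assume r: "0 < r \<and> r < \<delta>"
      have "1 / real (Suc n) * measure lebesgue (ball x r) \<le> e * measure lebesgue (ball x r)"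
        using n by (intro mult_right_mono) (auto simp: field_simps)
      then show "measure lebesgue (ball x r - Z) \<le> e * measure lebesgue (ball x r)"
        using d r by force
    qed (use \<open>\<delta> > 0\<close> in auto)
  qed
qed

lemma L2_integrable:
  fixes \<Omega> :: "complex set" and \<omega> :: "complex \<Rightarrow> real"
  assumes L2: "L2_loc \<Omega> \<omega>" and K: "compact K" "K \<subseteq> \<Omega>" and S: "S \<in> sets lebesgue" "S \<subseteq> K"
  shows "integrable lebesgue (\<lambda>z. indicator S z * (\<omega> z)\<^sup>2)"
    and "integrable lebesgue (\<lambda>z. indicator S z * \<bar>\<omega> z\<bar>)"
proof -
  have m\<Omega>: "(\<lambda>z. indicator \<Omega> z * \<omega> z) \<in> borel_measurable lebesgue"
    using L2 by (simp add: L2_loc_def set_borel_measurable_def)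
  have eqS: "(\<lambda>z. indicator S z * \<omega> z) = (\<lambda>z. indicator S z * (indicator \<Omega> z * \<omega> z))"
  proof (rule ext)
    fix z show "indicator S z * \<omega> z = indicator S z * (indicator \<Omega> z * \<omega> z)"
      using S K by (cases "z \<in> S") (auto simp: indicator_def)
  qed
  have mS: "(\<lambda>z. indicator S z * \<omega> z) \<in> borel_measurable lebesgue"
    unfolding eqS by (rule borel_measurable_times[OF borel_measurable_indicator[OF S(1)] m\<Omega>])
  have Kint: "integrable lebesgue (\<lambda>z. indicator K z * (\<omega> z)\<^sup>2)"
    using L2 K by (simp add: L2_loc_def set_integrable_def)
  have mS2: "(\<lambda>z. indicator S z * (\<omega> z)\<^sup>2) \<in> borel_measurable lebesgue"
  proof -
    have "(\<lambda>z. indicator S z * (\<omega> z)\<^sup>2) = (\<lambda>z. (indicator S z * \<omega> z)\<^sup>2)"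
      by (auto simp: indicator_def power2_eq_square)
    then show ?thesis using mS by simp
  qed
  show 1: "integrable lebesgue (\<lambda>z. indicator S z * (\<omega> z)\<^sup>2)"
    by (rule Bochner_Integration.integrable_bound[OF Kint mS2]) (use S in \<open>auto simp: indicator_def\<close>)
  have Kfin: "K \<in> lmeasurable" using K by (simp add: lmeasurable_compact)
  have Kint2: "integrable lebesgue (\<lambda>z. indicator K z + indicator K z * (\<omega> z)\<^sup>2)"
  proof (rule Bochner_Integration.integrable_add[OF _ Kint])
    show "integrable lebesgue (indicat_real K)"
      using Kfin by (intro integrable_real_indicator) (auto simp: fmeasurable_def)
  qed
  have mS1: "(\<lambda>z. indicator S z * \<bar>\<omega> z\<bar>) \<in> borel_measurable lebesgue"
  proof -
    have "(\<lambda>z. indicator S z * \<bar>\<omega> z\<bar>) = (\<lambda>z. \<bar>indicator S z * \<omega> z\<bar>)"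
      by (auto simp: indicator_def)
    then show ?thesis using mS by simp
  qed
  have pw: "\<bar>w\<bar> \<le> 1 + w\<^sup>2" for w :: real
  proof (cases "\<bar>w\<bar> \<le> 1")
    case True
    moreover have "0 \<le> w\<^sup>2" by simp
    ultimately show ?thesis by linarith
  next
    case False
    then have "\<bar>w\<bar> * 1 \<le> \<bar>w\<bar> * \<bar>w\<bar>" by (intro mult_left_mono) auto
    then have "\<bar>w\<bar> \<le> w\<^sup>2" by (simp add: power2_eq_square)
    then show ?thesis by linarith
  qed
  show "integrable lebesgue (\<lambda>z. indicator S z * \<bar>\<omega> z\<bar>)"
    by (rule Bochner_Integration.integrable_bound[OF Kint2 mS1]) (use S pw in \<open>auto simp: indicator_def\<close>)
qed

lemma amgm_aux:
  fixes t w :: real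
  assumes "t > 0"
  shows "2 * \<bar>w\<bar> \<le> t * w\<^sup>2 + 1 / t"
proof -
  have "0 \<le> (t * \<bar>w\<bar> - 1)\<^sup>2" by simp
  also have "(t * \<bar>w\<bar> - 1)\<^sup>2 = t * (t * w\<^sup>2 + 1 / t) - t * (2 * \<bar>w\<bar>)"
    using assms by (simp add: power2_eq_square algebra_simps abs_mult_self_eq)
  finally have "t * (2 * \<bar>w\<bar>) \<le> t * (t * w\<^sup>2 + 1 / t)" by simp
  then show ?thesis using assms by simp
qed

lemma key_step:
  fixes \<Omega> :: "complex set" and \<omega> :: "complex \<Rightarrow> real"
  assumes L2: "L2_loc \<Omega> \<omega>" and s: "s > 0" and sub: "cball z0 (2 * s) \<subseteq> \<Omega>"
    and Zm: "{z\<in>\<Omega>. \<omega> z = 0} \<in> sets lebesgue"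
    and RHI: "sqrt ((1 / s\<^sup>2) * (LINT z:ball z0 s|lebesgue. (\<omega> z)\<^sup>2))
                \<le> (C / s\<^sup>2) * (LINT z:ball z0 (2 * s)|lebesgue. \<bar>\<omega> z\<bar>)"
    and C: "C > 0" and k: "k > 0"
    and dens: "measure lebesgue (ball z0 s - {z\<in>\<Omega>. \<omega> z = 0}) \<le> k\<^sup>2 * s\<^sup>2"
  shows "(LINT z:ball z0 s|lebesgue. \<bar>\<omega> z\<bar>) \<le> k * C * (LINT z:ball z0 (2 * s)|lebesgue. \<bar>\<omega> z\<bar>)"
proof -
  define Z where "Z = {z\<in>\<Omega>. \<omega> z = 0}"
  define E where "E = ball z0 s - Z"
  define I where "I = (LINT z:ball z0 s|lebesgue. \<bar>\<omega> z\<bar>)"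
  define J where "J = (LINT z:ball z0 (2 * s)|lebesgue. \<bar>\<omega> z\<bar>)"
  define A where "A = (LINT z:ball z0 s|lebesgue. (\<omega> z)\<^sup>2)"
  define M where "M = measure lebesgue E"
  have Iu: "I = integral\<^sup>L lebesgue (\<lambda>z. indicator (ball z0 s) z * \<bar>\<omega> z\<bar>)"
    by (simp add: I_def set_lebesgue_integral_def)
  have Ju: "J = integral\<^sup>L lebesgue (\<lambda>z. indicator (ball z0 (2 * s)) z * \<bar>\<omega> z\<bar>)"
    by (simp add: J_def set_lebesgue_integral_def)
  have Au: "A = integral\<^sup>L lebesgue (\<lambda>z. indicator (ball z0 s) z * (\<omega> z)\<^sup>2)"
    by (simp add: A_def set_lebesgue_integral_def)
  have sub1: "ball z0 s \<subseteq> cball z0 (2 * s)" using s by (auto simp: subset_ball)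
  have sub2: "ball z0 (2 * s) \<subseteq> cball z0 (2 * s)" by auto
  have intA: "integrable lebesgue (\<lambda>z. indicator (ball z0 s) z * (\<omega> z)\<^sup>2)"
    by (rule L2_integrable(1)[OF L2 compact_cball sub]) (use sub1 in auto)
  have J0: "J \<ge> 0" unfolding Ju by (intro integral_nonneg_AE) (auto simp: indicator_def)
  have A0: "A \<ge> 0" unfolding Au by (intro integral_nonneg_AE) (auto simp: indicator_def)
  have Efm: "E \<in> lmeasurable"
    unfolding E_def by (rule fmeasurable_Diff) (use Zm Z_def in auto)
  have Em: "E \<in> sets lebesgue" by (rule fmeasurableD[OF Efm])
  have bound: "2 * I \<le> t * A + M / t" if t: "t > 0" for t
  proof -
    have "2 * I = integral\<^sup>L lebesgue (\<lambda>z. 2 * (indicator (ball z0 s) z * \<bar>\<omega> z\<bar>))"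
      unfolding Iu by simp
    also have "\<dots> \<le> integral\<^sup>L lebesgue (\<lambda>z. t * (indicator (ball z0 s) z * (\<omega> z)\<^sup>2) + (1/t) * indicator E z)"
    proof (rule integral_mono)
      show "integrable lebesgue (\<lambda>z. t * (indicator (ball z0 s) z * (\<omega> z)\<^sup>2) + (1/t) * indicator E z)"
        using intA Efm by (intro Bochner_Integration.integrable_add integrable_mult_right integrable_real_indicator)
          (auto simp: fmeasurable_def)
      show "integrable lebesgue (\<lambda>z. 2 * (indicator (ball z0 s) z * \<bar>\<omega> z\<bar>))"
        by (intro integrable_mult_right L2_integrable(2)[OF L2 compact_cball sub]) (use sub1 in auto)
      fix z
      show "2 * (indicator (ball z0 s) z * \<bar>\<omega> z\<bar>)
            \<le> t * (indicator (ball z0 s) z * (\<omega> z)\<^sup>2) + 1 / t * indicator E z"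
      proof (cases "z \<in> ball z0 s \<and> \<omega> z \<noteq> 0")
        case True
        then have "z \<in> E" using sub1 sub by (auto simp: E_def Z_def)
        then show ?thesis using True amgm_aux[OF t, of "\<omega> z"] by simp
      next
        case False
        have "0 \<le> t * (indicator (ball z0 s) z * (\<omega> z)\<^sup>2) + 1 / t * indicator E z"
          using t by (simp add: indicator_def)
        then show ?thesis using False by (auto simp: indicator_def)
      qed
    qed
    also have "\<dots> = t * A + M / t"
      unfolding Au M_def
      using intA Efm
      by (subst Bochner_Integration.integral_add) (auto simp: fmeasurable_def)
    finally show ?thesis .
  qed
  have "sqrt (A / s\<^sup>2) \<le> C * J / s\<^sup>2" using RHI by (simp add: A_def J_def)
  then have "(sqrt (A / s\<^sup>2))\<^sup>2 \<le> (C * J / s\<^sup>2)\<^sup>2"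
    using A0 by (intro power_mono) auto
  then have "A / s\<^sup>2 \<le> (C * J / s\<^sup>2)\<^sup>2" using A0 by simp
  then have AJ: "A \<le> C\<^sup>2 * J\<^sup>2 / s\<^sup>2" using s by (simp add: field_simps power2_eq_square)
  have Mb: "M \<le> k\<^sup>2 * s\<^sup>2" using dens by (simp add: M_def E_def Z_def)
  show ?thesis
  proof (cases "J > 0")
    case True
    define t where "t = k * s\<^sup>2 / (C * J)"
    have t: "t > 0" using True k s C by (simp add: t_def)
    have "t * A \<le> t * (C\<^sup>2 * J\<^sup>2 / s\<^sup>2)" using AJ t by (intro mult_left_mono) auto
    also have "\<dots> = k * C * J" using True s C by (simp add: t_def field_simps power2_eq_square)
    finally have 1: "t * A \<le> k * C * J" .
    have "M / t \<le> k\<^sup>2 * s\<^sup>2 / t" using Mb t by (intro divide_right_mono) auto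
    also have "\<dots> = k * C * J" using True s C k by (simp add: t_def field_simps power2_eq_square)
    finally have 2: "M / t \<le> k * C * J" .
    show ?thesis using bound[OF t] 1 2 by (simp add: I_def J_def)
  next
    case False
    then have "J = 0" using J0 by simp
    then have A00: "A = 0" using AJ A0 by simp
    have "I \<le> 0"
    proof (rule ccontr)
      assume "\<not> I \<le> 0"
      then have I: "I > 0" by simp
      define t where "t = k\<^sup>2 * s\<^sup>2 / I"
      have t: "t > 0" using I k s by (simp add: t_def)
      have "M / t \<le> k\<^sup>2 * s\<^sup>2 / t" using Mb t by (intro divide_right_mono) auto
      also have "\<dots> = I" using I k s by (simp add: t_def)
      finally show False using bound[OF t] A00 I by simp
    qed
    then show ?thesis using \<open>J = 0\<close> by (simp add: I_def J_def)
  qed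
qed

theorem theorem4p1:
  fixes \<Omega> :: "complex set" and \<omega> :: "complex \<Rightarrow> real"
  assumes "open \<Omega>" and "connected \<Omega>"
    and "L2_loc \<Omega> \<omega>"
    and "weak_RHI \<Omega> \<omega>"
  shows "AE z0 in lebesgue. z0 \<in> \<Omega> \<and> \<omega> z0 = 0 \<longrightarrow>
           (\<forall>N::nat. 0 < N \<longrightarrow>
              (\<exists>r0>0. ball z0 (2 * r0) \<subseteq> \<Omega> \<and>
                 (\<forall>r. 0 < r \<and> r \<le> r0 \<longrightarrow>
                    (LINT z:ball z0 r|lebesgue. \<bar>\<omega> z\<bar>)
                      \<le> (r ^ N / r0 ^ N) * (LINT z:ball z0 (2 * r0)|lebesgue. \<bar>\<omega> z\<bar>))))"
proof -
  note op = assms(1) and L2 = assms(3)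
  obtain c where cRHI: "\<And>a r. 0 < r \<Longrightarrow> ball a (2 * r) \<subseteq> \<Omega> \<Longrightarrow>
     sqrt ((1 / r\<^sup>2) * (LINT z:ball a r|lebesgue. (\<omega> z)\<^sup>2))
       \<le> (c / r\<^sup>2) * (LINT z:ball a (2 * r)|lebesgue. \<bar>\<omega> z\<bar>)"
    using assms(4) unfolding weak_RHI_def by blast
  define C where "C = max c 1"
  have C: "C > 0" "c \<le> C" by (auto simp: C_def)
  define Z where "Z = {z\<in>\<Omega>. \<omega> z = 0}"
  have Zm: "Z \<in> sets lebesgue"
  proof -
    have m\<Omega>: "(\<lambda>z. indicator \<Omega> z * \<omega> z) \<in> borel_measurable lebesgue"
      using L2 by (simp add: L2_loc_def set_borel_measurable_def)
    have "(\<lambda>z. indicator \<Omega> z * \<omega> z) -` {0} \<inter> space lebesgue \<in> sets lebesgue"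
      by (rule borel_measurable_vimage[OF m\<Omega>])
    moreover have "\<Omega> \<in> sets lebesgue" using op by simp
    ultimately have "((\<lambda>z. indicator \<Omega> z * \<omega> z) -` {0} \<inter> space lebesgue) \<inter> \<Omega> \<in> sets lebesgue"
      by blast
    also have "((\<lambda>z. indicator \<Omega> z * \<omega> z) -` {0} \<inter> space lebesgue) \<inter> \<Omega> = Z"
      by (auto simp: Z_def indicator_def)
    finally show ?thesis .
  qed
  define I where "I = (\<lambda>z0 r. LINT z:ball z0 r|lebesgue. \<bar>\<omega> z\<bar>)"
  show ?thesis
    using density_AE[OF Zm]
  proof (rule eventually_mono, intro impI allI)
    fix z0 :: complex and N :: nat
    assume H: "z0 \<in> Z \<longrightarrow> (\<forall>e>0. \<exists>\<delta>>0. \<forall>r. 0 < r \<and> r < \<delta> \<longrightarrow>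
            measure lebesgue (ball z0 r - Z) \<le> e * measure lebesgue (ball z0 r))"
      and z0: "z0 \<in> \<Omega> \<and> \<omega> z0 = 0" and N: "0 < N"
    define \<rho> :: real where "\<rho> = (1/2) ^ N"
    define k where "k = \<rho> / C"
    have k: "k > 0" using C by (simp add: k_def \<rho>_def)
    define e where "e = k\<^sup>2 / pi"
    have e: "e > 0" using k by (simp add: e_def)
    obtain \<delta> where \<delta>: "\<delta> > 0" and dens: "\<And>r. 0 < r \<Longrightarrow> r < \<delta> \<Longrightarrow>
            measure lebesgue (ball z0 r - Z) \<le> e * measure lebesgue (ball z0 r)"
      using H z0 e by (auto simp: Z_def)
    obtain \<epsilon> where \<epsilon>: "\<epsilon> > 0" "ball z0 \<epsilon> \<subseteq> \<Omega>" using op z0 openE by blast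
    define r0 where "r0 = min (\<delta>/2) (\<epsilon>/4)"
    have r0: "r0 > 0" using \<delta> \<epsilon> by (simp add: r0_def)
    have cb: "cball z0 (2 * r0) \<subseteq> \<Omega>"
    proof -
      have "cball z0 (2 * r0) \<subseteq> ball z0 \<epsilon>" using \<epsilon> r0 by (auto simp: r0_def)
      then show ?thesis using \<epsilon> by blast
    qed
    have Inn: "I z0 r \<ge> 0" for r
      unfolding I_def set_lebesgue_integral_def by (intro integral_nonneg_AE) (auto simp: indicator_def)
    have mono: "I z0 r \<le> I z0 r'" if "0 < r" "r \<le> r'" "r' \<le> 2 * r0" for r r'
    proof -
      have "integral\<^sup>L lebesgue (\<lambda>z. indicator (ball z0 r) z * \<bar>\<omega> z\<bar>)
            \<le> integral\<^sup>L lebesgue (\<lambda>z. indicator (ball z0 r') z * \<bar>\<omega> z\<bar>)"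
      proof (rule integral_mono)
        show "integrable lebesgue (\<lambda>z. indicator (ball z0 r) z * \<bar>\<omega> z\<bar>)"
          by (rule L2_integrable(2)[OF L2 compact_cball cb]) (use that in \<open>auto simp: subset_ball\<close>)
        show "integrable lebesgue (\<lambda>z. indicator (ball z0 r') z * \<bar>\<omega> z\<bar>)"
          by (rule L2_integrable(2)[OF L2 compact_cball cb]) (use that in \<open>auto simp: subset_ball\<close>)
        fix z show "indicator (ball z0 r) z * \<bar>\<omega> z\<bar> \<le> indicator (ball z0 r') z * \<bar>\<omega> z\<bar>"
          using that by (auto simp: indicator_def)
      qed
      then show ?thesis by (simp add: I_def set_lebesgue_integral_def)
    qed
    have Kstep: "I z0 s \<le> \<rho> * I z0 (2 * s)" if s: "0 < s" "s \<le> r0" for s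
    proof -
      have cbs: "cball z0 (2 * s) \<subseteq> \<Omega>" using cb s by (auto simp: subset_cball)
      then have bs: "ball z0 (2 * s) \<subseteq> \<Omega>" by auto
      have Jn: "0 \<le> (LINT z:ball z0 (2 * s)|lebesgue. \<bar>\<omega> z\<bar>)"
        using Inn by (simp add: I_def)
      have "(c / s\<^sup>2) * (LINT z:ball z0 (2 * s)|lebesgue. \<bar>\<omega> z\<bar>)
            \<le> (C / s\<^sup>2) * (LINT z:ball z0 (2 * s)|lebesgue. \<bar>\<omega> z\<bar>)"
        using C Jn by (intro mult_right_mono divide_right_mono) auto
      with cRHI[OF s(1) bs] have RHI: "sqrt ((1 / s\<^sup>2) * (LINT z:ball z0 s|lebesgue. (\<omega> z)\<^sup>2))
            \<le> (C / s\<^sup>2) * (LINT z:ball z0 (2 * s)|lebesgue. \<bar>\<omega> z\<bar>)" by linarith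
      have "s < \<delta>" using s r0 \<delta> by (simp add: r0_def)
      have vol: "measure lebesgue (ball z0 s) = pi * s\<^sup>2"
        using s by (simp add: content_ball unit_ball_vol_2)
      have "measure lebesgue (ball z0 s - Z) \<le> k\<^sup>2 * s\<^sup>2"
        using dens[OF s(1) \<open>s < \<delta>\<close>] vol by (simp add: e_def)
      from key_step[OF L2 s(1) cbs Zm[unfolded Z_def] RHI C(1) k this[unfolded Z_def]]
      have "I z0 s \<le> k * C * I z0 (2 * s)" by (simp add: I_def)
      moreover have "k * C = \<rho>" using C by (simp add: k_def)
      ultimately show ?thesis by simp
    qed
    have P: "\<forall>r. r0 / 2 ^ n < r \<and> r \<le> r0 \<longrightarrow> I z0 r \<le> (r / r0) ^ N * I z0 (2 * r0)" for n :: nat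
    proof (induction n)
      case 0
      then show ?case by auto
    next
      case (Suc n)
      show ?case
      proof (intro allI impI)
        fix r assume r: "r0 / 2 ^ Suc n < r \<and> r \<le> r0"
        have rpos: "0 < r" using r r0 by (smt (verit) divide_pos_pos zero_less_power)
        have 1: "I z0 r \<le> \<rho> * I z0 (2 * r)" using Kstep rpos r by simp
        show "I z0 r \<le> (r / r0) ^ N * I z0 (2 * r0)"
        proof (cases "r0 < 2 * r")
          case True
          have a: "I z0 (2 * r) \<le> I z0 (2 * r0)" using mono rpos r by simp
          have b: "\<rho> \<le> (r / r0) ^ N"
            unfolding \<rho>_def using True r0 by (intro power_mono) (auto simp: field_simps)
          have p: "0 \<le> (r / r0) ^ N" using rpos r0 by (intro zero_le_power divide_nonneg_nonneg) auto
          have "\<rho> * I z0 (2 * r) \<le> (r / r0) ^ N * I z0 (2 * r0)"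
            by (rule mult_mono[OF b a p Inn])
          then show ?thesis using 1 by linarith
        next
          case False
          have "r0 / 2 ^ n < 2 * r" using r by (simp add: field_simps)
          then have "I z0 (2 * r) \<le> (2 * r / r0) ^ N * I z0 (2 * r0)"
            using Suc.IH False by simp
          then have "\<rho> * I z0 (2 * r) \<le> \<rho> * ((2 * r / r0) ^ N * I z0 (2 * r0))"
            by (intro mult_left_mono) (auto simp: \<rho>_def)
          also have "\<rho> * ((2 * r / r0) ^ N * I z0 (2 * r0)) = (r / r0) ^ N * I z0 (2 * r0)"
          proof -
            have "\<rho> * (2 * r / r0) ^ N = ((1/2) * (2 * r / r0)) ^ N"
              unfolding \<rho>_def by (rule power_mult_distrib[symmetric])
            also have "(1/2) * (2 * r / r0) = r / r0" by simp
            finally show ?thesis by (simp only: mult.assoc[symmetric])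
          qed
          finally show ?thesis using 1 by linarith
        qed
      qed
    qed
    show "\<exists>r0>0. ball z0 (2 * r0) \<subseteq> \<Omega> \<and>
                 (\<forall>r. 0 < r \<and> r \<le> r0 \<longrightarrow>
                    (LINT z:ball z0 r|lebesgue. \<bar>\<omega> z\<bar>)
                      \<le> (r ^ N / r0 ^ N) * (LINT z:ball z0 (2 * r0)|lebesgue. \<bar>\<omega> z\<bar>))"
    proof (intro exI conjI allI impI)
      show "r0 > 0" by (rule r0)
      show "ball z0 (2 * r0) \<subseteq> \<Omega>" using cb by auto
      fix r assume r: "0 < r \<and> r \<le> r0"
      obtain n where n: "r0 / r < 2 ^ n" using real_arch_pow[of 2 "r0 / r"] by auto
      then have "r0 / 2 ^ n < r" using r by (simp add: field_simps)
      then have "I z0 r \<le> (r / r0) ^ N * I z0 (2 * r0)" using P r by blast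
      then show "(LINT z:ball z0 r|lebesgue. \<bar>\<omega> z\<bar>)
                      \<le> (r ^ N / r0 ^ N) * (LINT z:ball z0 (2 * r0)|lebesgue. \<bar>\<omega> z\<bar>)"
        by (simp add: I_def power_divide)
    qed
  qed
qed

end
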